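(* Let $(X,d)$ be a non-empty complete metric space and let $T:X\to X$ be a strong contraction mapping. Let $x_0\in X$ be arbitrary and define the sequence $(x_i)_{i\ge0}$ by $x_i=T(x_{i-1})$ for $i\ge1$. Then $(x_i)$ is a Cauchy sequence in $(X,d)$, and hence converges to a limit $x^*\in X$.
   Context: For a subset $A$ of a metric space $(X,d)$, its diameter is $D(A):=\sup\{d(x,y): x,y\in A\}$. Given a self-map $T:X\to X$, set $X_0:=X$ and $X_{i+1}:=T(X_i)$ for $i\ge 0$. The map $T$ is called a strong contraction mapping if $X_{i+1}\subseteq X_i$ for all $i\ge0$ and there exists $q\in[0,1)$ such that $D(X_{i+1})\le q\,D(X_i)$ for all $i\ge 0$. *)

theory Defs
  imports "HOL-Analysis.Analysis"
begin

definition diam_e :: "'a::metric_space set \<Rightarrow> ereal" where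
  "diam_e A = (SUP p\<in>A \<times> A. ereal (dist (fst p) (snd p)))"

definition iter_img :: "('a \<Rightarrow> 'a) \<Rightarrow> nat \<Rightarrow> 'a set" where
  "iter_img T i = (T ^^ i) ` UNIV"

text \<open>Strong contraction mapping. The inequality D(X_{i+1}) <= q D(X_i) is read as an
  inequality of real numbers, i.e. the diameters D(X_i) are finite.\<close>
definition strong_contraction :: "('a::metric_space \<Rightarrow> 'a) \<Rightarrow> bool" where
  "strong_contraction T \<longleftrightarrow>
     (\<forall>i. iter_img T (Suc i) \<subseteq> iter_img T i) \<and>
     (\<forall>i. diam_e (iter_img T i) < \<infinity>) \<and>
     (\<exists>q::real. 0 \<le> q \<and> q < 1 \<and>
        (\<forall>i. diam_e (iter_img T (Suc i)) \<le> ereal q * diam_e (iter_img T i)))"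

end

theory Submission
  imports Defs
begin

theorem lemma1:
  fixes T :: "'a::complete_space \<Rightarrow> 'a" and x0 :: 'a and x :: "nat \<Rightarrow> 'a"
  assumes "strong_contraction T"
    and "x 0 = x0"
    and "\<And>i. i \<ge> 1 \<Longrightarrow> x i = T (x (i - 1))"
  shows "Cauchy x \<and> (\<exists>xs. x \<longlonglongrightarrow> xs)"
proof -
  have sub: "\<And>i. iter_img T (Suc i) \<subseteq> iter_img T i"
    and fin: "\<And>i. diam_e (iter_img T i) < \<infinity>"
    using assms(1) unfolding strong_contraction_def by auto
  obtain q :: real where q: "0 \<le> q" "q < 1"
    and qd: "\<And>i. diam_e (iter_img T (Suc i)) \<le> ereal q * diam_e (iter_img T i)"
    using assms(1) unfolding strong_contraction_def by auto
  have xn: "x n = (T ^^ n) x0" for n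
  proof (induction n)
    case 0 then show ?case using assms(2) by simp
  next
    case (Suc n) then show ?case using assms(3)[of "Suc n"] by simp
  qed
  have xin: "x n \<in> iter_img T n" for n unfolding iter_img_def xn by simp
  have mono: "iter_img T n \<subseteq> iter_img T N" if "N \<le> n" for n N
    using that
  proof (induction n rule: dec_induct)
    case base then show ?case by simp
  next
    case (step n) then show ?case using sub[of n] by blast
  qed
  have up: "ereal (dist a b) \<le> diam_e A" if "a \<in> A" "b \<in> A" for a b A
    unfolding diam_e_def by (rule SUP_upper2[of "(a,b)"]) (use that in auto)
  have nn: "0 \<le> diam_e (iter_img T i)" for i
    using up[OF xin[of i] xin[of i]] by (simp add: zero_ereal_def)
  obtain D0 where D0: "diam_e (iter_img T 0) = ereal D0"
    using fin[of 0] nn[of 0] by (cases "diam_e (iter_img T 0)") auto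
  have bnd: "diam_e (iter_img T n) \<le> ereal (q ^ n * D0)" for n
  proof (induction n)
    case 0 then show ?case using D0 by simp
  next
    case (Suc n)
    have "diam_e (iter_img T (Suc n)) \<le> ereal q * diam_e (iter_img T n)" by (rule qd)
    also have "\<dots> \<le> ereal q * ereal (q ^ n * D0)"
      by (rule ereal_mult_left_mono[OF Suc]) (use q in simp)
    also have "\<dots> = ereal (q ^ Suc n * D0)" by simp
    finally show ?case .
  qed
  have dd: "dist (x m) (x n) \<le> q ^ N * D0" if "N \<le> m" "N \<le> n" for m n N
  proof -
    have "ereal (dist (x m) (x n)) \<le> diam_e (iter_img T N)"
      using up mono[OF that(1)] mono[OF that(2)] xin by blast
    also have "\<dots> \<le> ereal (q ^ N * D0)" by (rule bnd)
    finally show ?thesis by simp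
  qed
  have lim: "(\<lambda>N. q ^ N * D0) \<longlonglongrightarrow> 0"
    using LIMSEQ_power_zero[of q] q by (auto intro: tendsto_mult_left_zero)
  have C: "Cauchy x"
  proof (rule metric_CauchyI)
    fix e :: real assume "0 < e"
    then obtain N where "\<forall>n\<ge>N. norm (q ^ n * D0 - 0) < e"
      using lim \<open>0 < e\<close> unfolding LIMSEQ_iff by blast
    then have "q ^ N * D0 < e" by auto
    then show "\<exists>M. \<forall>m\<ge>M. \<forall>n\<ge>M. dist (x m) (x n) < e"
      using dd by (meson le_less_trans)
  qed
  then show ?thesis using Cauchy_convergent_iff convergent_def by blast
qed

end
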